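(* Let $c_k\in(0,1)$ and $l_k>0$ with $l_k\to0$, let $I_k$ be the open interval of length $l_k$ centered at $c_k$, and let $S=\bigcap_{m\ge1}\bigcup_{k\ge m}I_k$. If $S$ is re-distributable, then $\mathrm{Cap}(S)=\mathrm{Cap}([0,1])$.
   Context: Interaction: $I(\nu,\mu)=\iint(-\log|z-w|)\,d\nu(z)\,d\mu(w)$, energy $I(\mu)=I(\mu,\mu)$; capacity $\mathrm{Cap}(E)=\exp(-\inf I(\mu))$, infimum over Borel probability measures with compact support contained in $E$ ($e^{-\infty}=0$). $S$ is called re-distributable if: for every probability measure $\nu$ with piecewise continuous density supported on a finite collection of intervals in $[0,1]$, every $\varepsilon>0$ and every $m\in\mathbb{N}$, there is a probability measure $\nu'$ with piecewise continuous density such that (1) $I(\nu')<I(\nu)+\varepsilon$ and (2) $\nu'$ is supported on $\mathrm{supp}\,\nu\cap V_n$ for some $n\ge m$, where $V_n$ is a finite union of intervals $I_k$ with $k\ge n$. *)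

theory Defs
  imports "HOL-Probability.Probability"
begin

definition measure_support :: "real measure \<Rightarrow> real set" where
  "measure_support M = {x. \<forall>e>0. emeasure M (ball x e) > 0}"

definition log_kernel_pos :: "real \<Rightarrow> real \<Rightarrow> ennreal" where
  "log_kernel_pos z w = (if z = w then \<infinity> else ennreal (max 0 (- ln \<bar>z - w\<bar>)))"

definition log_kernel_neg :: "real \<Rightarrow> real \<Rightarrow> ennreal" where
  "log_kernel_neg z w = (if z = w then 0 else ennreal (max 0 (ln \<bar>z - w\<bar>)))"

definition log_interaction :: "real measure \<Rightarrow> real measure \<Rightarrow> ereal" where
  "log_interaction \<nu> \<mu> =
     enn2ereal (\<integral>\<^sup>+ z. (\<integral>\<^sup>+ w. log_kernel_pos z w \<partial>\<mu>) \<partial>\<nu>)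
   - enn2ereal (\<integral>\<^sup>+ z. (\<integral>\<^sup>+ w. log_kernel_neg z w \<partial>\<mu>) \<partial>\<nu>)"

definition log_energy :: "real measure \<Rightarrow> ereal" where
  "log_energy \<mu> = log_interaction \<mu> \<mu>"

definition admissible_measures :: "real set \<Rightarrow> real measure set" where
  "admissible_measures E = {\<mu>. prob_space \<mu> \<and> sets \<mu> = sets borel \<and>
       compact (measure_support \<mu>) \<and> measure_support \<mu> \<subseteq> E}"

definition log_capacity :: "real set \<Rightarrow> ereal" where
  "log_capacity E =
     (case (INF \<mu> \<in> admissible_measures E. log_energy \<mu>) of
        ereal r \<Rightarrow> ereal (exp (- r))
      | PInfty \<Rightarrow> 0
      | MInfty \<Rightarrow> PInfty)"

definition piecewise_continuous :: "(real \<Rightarrow> real) \<Rightarrow> bool" where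
  "piecewise_continuous f \<longleftrightarrow> (\<exists>P. finite P \<and> continuous_on (- P) f \<and>
      (\<forall>p\<in>P. (\<exists>a. (f \<longlongrightarrow> a) (at_left p)) \<and> (\<exists>b. (f \<longlongrightarrow> b) (at_right p))))"

definition has_pc_density :: "real measure \<Rightarrow> bool" where
  "has_pc_density \<nu> \<longleftrightarrow> (\<exists>f. (\<forall>x. 0 \<le> f x) \<and> f \<in> borel_measurable borel \<and>
      piecewise_continuous f \<and> \<nu> = density lborel (\<lambda>x. ennreal (f x)))"

definition redistributable :: "(nat \<Rightarrow> real set) \<Rightarrow> bool" where
  "redistributable I \<longleftrightarrow>
    (\<forall>\<nu> \<epsilon> m. prob_space \<nu> \<and> has_pc_density \<nu> \<and>
        (\<exists>F. finite F \<and> (\<forall>A\<in>F. is_interval A \<and> A \<subseteq> {0..1}) \<and> measure_support \<nu> \<subseteq> \<Union>F)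
        \<and> \<epsilon> > 0 \<and> m \<ge> 1 \<longrightarrow>
      (\<exists>\<nu>'. prob_space \<nu>' \<and> has_pc_density \<nu>' \<and>
          log_energy \<nu>' < log_energy \<nu> + ereal \<epsilon> \<and>
          (\<exists>n\<ge>m. \<exists>K. finite K \<and> K \<subseteq> {n..} \<and>
              measure_support \<nu>' \<subseteq> measure_support \<nu> \<inter> (\<Union>k\<in>K. I k))))"

end

theory Submission
  imports Defs
begin

lemma measure_support_closed:
  assumes sM: "sets M = sets borel"
  shows "closed (measure_support M)"
proof -
  have "open (- measure_support M)"
    unfolding open_dist
  proof safe
    fix x assume "x \<notin> measure_support M"
    then obtain e where e: "e > 0" "emeasure M (ball x e) = 0"
      unfolding measure_support_def by (auto simp: not_less)
    show "\<exists>d>0. \<forall>y. dist y x < d \<longrightarrow> y \<in> - measure_support M"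
    proof (intro exI[of _ "e/2"] conjI allI impI)
      fix y assume y: "dist y x < e/2"
      have "ball y (e/2) \<subseteq> ball x e"
      proof
        fix z assume "z \<in> ball y (e/2)"
        hence "dist y z < e/2" by simp
        moreover have "dist x z \<le> dist x y + dist y z" by (rule dist_triangle)
        ultimately show "z \<in> ball x e" using y by (simp add: dist_commute)
      qed
      hence "emeasure M (ball y (e/2)) \<le> emeasure M (ball x e)"
        using sM by (intro emeasure_mono) (auto intro!: borel_open)
      thus "y \<in> - measure_support M" using e unfolding measure_support_def
        by (auto intro!: exI[of _ "e/2"])
    qed (use e in auto)
  qed
  thus ?thesis by (simp add: closed_def)
qed

lemma AE_measure_support:
  assumes sM: "sets M = sets borel"
  shows "AE x in M. x \<in> measure_support M"
proof -
  define Q where "Q = {(q,r). q \<in> \<rat> \<and> r \<in> \<rat> \<and> r > 0 \<and> emeasure M (ball q r) = 0}"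
  have cQ: "countable Q"
  proof (rule countable_subset)
    show "Q \<subseteq> \<rat> \<times> \<rat>" by (auto simp: Q_def)
    show "countable (\<rat> \<times> (\<rat>::real set))" by (intro countable_SIGMA countable_rat)
  qed
  have N: "(\<Union>p\<in>Q. ball (fst p) (snd p)) \<in> null_sets M"
  proof (rule null_sets_UN'[OF cQ])
    fix p assume "p \<in> Q"
    moreover have "ball (fst p) (snd p) \<in> sets M" using sM borel_open[OF open_ball] by simp
    ultimately show "ball (fst p) (snd p) \<in> null_sets M"
      by (cases p) (simp add: Q_def null_sets_def)
  qed
  show ?thesis
  proof (rule AE_I'[OF N])
    show "{x \<in> space M. x \<notin> measure_support M} \<subseteq> (\<Union>p\<in>Q. ball (fst p) (snd p))"
    proof
    fix x assume "x \<in> {x \<in> space M. x \<notin> measure_support M}"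
    then obtain e where e: "e > 0" "emeasure M (ball x e) = 0"
      unfolding measure_support_def by (auto simp: not_less)
    obtain q where q: "q \<in> \<rat>" "x - e/3 < q" "q < x + e/3"
      using Rats_dense_in_real[of "x - e/3" "x + e/3"] e by auto
    obtain r where r: "r \<in> \<rat>" "e/3 < r" "r < 2*e/3"
      using Rats_dense_in_real[of "e/3" "2*e/3"] e by auto
    have sub: "ball q r \<subseteq> ball x e"
    proof
      fix z assume "z \<in> ball q r"
      hence "\<bar>q - z\<bar> < r" by (simp add: dist_real_def)
      thus "z \<in> ball x e" using q r by (simp add: dist_real_def)
    qed
    have "emeasure M (ball q r) \<le> emeasure M (ball x e)"
      using sM sub borel_open[OF open_ball] by (intro emeasure_mono) simp_all
    hence "(q,r) \<in> Q" using e q r by (auto simp: Q_def)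
    moreover have "x \<in> ball q r" using q r by (simp add: dist_real_def)
    ultimately show "x \<in> (\<Union>p\<in>Q. ball (fst p) (snd p))" by (intro UN_I[of "(q,r)"]) auto
    qed
  qed
qed

lemma AE_of_support:
  assumes "sets M = sets borel" "measure_support M \<subseteq> A"
  shows "AE x in M. x \<in> A"
  using AE_measure_support[OF assms(1)] by (rule eventually_mono) (use assms(2) in auto)

lemma emeasure_zero_off_support:
  assumes sM: "sets M = sets borel" and U: "U \<in> sets borel" "U \<inter> measure_support M = {}"
  shows "emeasure M U = 0"
proof -
  have "AE x in M. x \<notin> U" using AE_measure_support[OF sM] by (rule eventually_mono) (use U in auto)
  thus ?thesis using U sM by (subst AE_iff_measurable[symmetric]) (auto simp: sets_eq_imp_space_eq)
qed

definition energy :: "real measure \<Rightarrow> ennreal" where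
  "energy M = (\<integral>\<^sup>+z. (\<integral>\<^sup>+w. log_kernel_pos z w \<partial>M) \<partial>M)"

lemma measurable_kpos[measurable]:
  "(\<lambda>p. log_kernel_pos (fst p) (snd p)) \<in> borel_measurable (borel \<Otimes>\<^sub>M borel)"
  unfolding log_kernel_pos_def by measurable

lemma measurable_kpos':
  assumes "sets M = sets borel" "sets N = sets borel"
  shows "(\<lambda>p. log_kernel_pos (fst p) (snd p)) \<in> borel_measurable (M \<Otimes>\<^sub>M N)"
  using measurable_kpos by (subst measurable_cong_sets[OF sets_pair_measure_cong[OF assms] refl]) 

lemma log_energy_eq:
  assumes sM: "sets M = sets borel" and AE: "AE x in M. x \<in> {0..1}"
  shows "log_energy M = enn2ereal (energy M)"
proof -
  have "(\<integral>\<^sup>+z. (\<integral>\<^sup>+w. log_kernel_neg z w \<partial>M) \<partial>M) = (\<integral>\<^sup>+z. 0 \<partial>M)"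
  proof (rule nn_integral_cong_AE)
    show "AE z in M. (\<integral>\<^sup>+w. log_kernel_neg z w \<partial>M) = 0"
      using AE
    proof (rule eventually_mono)
      fix z :: real assume z: "z \<in> {0..1}"
      have "(\<integral>\<^sup>+w. log_kernel_neg z w \<partial>M) = (\<integral>\<^sup>+w. 0 \<partial>M)"
        using AE
      proof (intro nn_integral_cong_AE, rule eventually_mono)
        fix w :: real assume w: "w \<in> {0..1}"
        have "\<bar>z - w\<bar> \<le> 1" using z w by auto
        hence "z \<noteq> w \<Longrightarrow> ln \<bar>z - w\<bar> \<le> 0" by (subst ln_le_zero_iff) auto
        thus "log_kernel_neg z w = 0" unfolding log_kernel_neg_def by auto
      qed
      thus "(\<integral>\<^sup>+w. log_kernel_neg z w \<partial>M) = 0" by simp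
    qed
  qed
  thus ?thesis unfolding log_energy_def log_interaction_def energy_def by (simp add: zero_ennreal.rep_eq)
qed

lemma real_distribution_iff: "real_distribution M \<longleftrightarrow> prob_space M \<and> sets M = sets borel"
  by (auto simp: real_distribution_def real_distribution_axioms_def)

lemma weak_limit_null:
  assumes rd: "\<And>n. real_distribution (\<nu> n)" and rdm: "real_distribution \<mu>" and wc: "weak_conv_m \<nu> \<mu>"
    and e: "e > 0"
    and ev: "eventually (\<lambda>n. emeasure (\<nu> n) (ball x e) = 0) sequentially"
  shows "emeasure \<mu> (ball x (e/2)) = 0"
proof -
  define g where "g y = max 0 (e/2 - \<bar>y - x\<bar>)" for y :: real
  have cont: "isCont g y" for y unfolding g_def by (intro continuous_intros)
  have bnd: "norm (g y) \<le> e/2" for y using e unfolding g_def by (auto simp: max_def)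
  have lim: "(\<lambda>n. integral\<^sup>L (\<nu> n) g) \<longlonglongrightarrow> integral\<^sup>L \<mu> g"
    by (rule weak_conv_imp_integral_bdd_continuous_conv[OF rd rdm wc cont bnd])
  have "eventually (\<lambda>n. integral\<^sup>L (\<nu> n) g = 0) sequentially"
    using ev
  proof (rule eventually_mono)
    fix n assume h: "emeasure (\<nu> n) (ball x e) = 0"
    have sb: "sets (\<nu> n) = sets borel" using rd[of n] by (simp add: real_distribution_iff)
    have "ball x e \<in> null_sets (\<nu> n)" using h sb borel_open[OF open_ball] by (simp add: null_sets_def)
    hence "AE y in \<nu> n. y \<notin> ball x e" by (rule AE_not_in)
    hence "AE y in \<nu> n. g y = 0"
      by (rule eventually_mono) (auto simp: g_def dist_real_def)
    thus "integral\<^sup>L (\<nu> n) g = 0" by (rule integral_eq_zero_AE)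
  qed
  hence "(\<lambda>n. integral\<^sup>L (\<nu> n) g) \<longlonglongrightarrow> 0"
    by (rule tendsto_eventually)
  hence I0: "integral\<^sup>L \<mu> g = 0" using lim LIMSEQ_unique by blast
  interpret m: real_distribution \<mu> by (rule rdm)
  have gm: "g \<in> borel_measurable \<mu>" using cont by (simp add: continuous_at_imp_continuous_on borel_measurable_continuous_onI)
  have int: "integrable \<mu> g" using bnd gm by (intro m.integrable_const_bound[of _ "e/2"]) auto
  have "AE y in \<mu>. g y = 0"
    using integral_nonneg_eq_0_iff_AE[OF int] I0 by (auto simp: g_def)
  hence "AE y in \<mu>. y \<notin> ball x (e/2)"
    by (rule eventually_mono) (auto simp: g_def dist_real_def max_def abs_minus_commute split: if_splits)
  thus ?thesis using borel_open[OF open_ball] by (subst AE_iff_measurable[symmetric]) auto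
qed

lemma measurable_kpos2[measurable (raw)]:
  assumes [measurable]: "f \<in> borel_measurable M" "g \<in> borel_measurable M"
  shows "(\<lambda>x. log_kernel_pos (f x) (g x)) \<in> borel_measurable M"
proof -
  have "(\<lambda>x. (f x, g x)) \<in> measurable M (borel \<Otimes>\<^sub>M borel)" by measurable
  from measurable_comp[OF this measurable_kpos] show ?thesis by (simp add: comp_def)
qed

lemma kpos_tendsto:
  fixes a b :: "nat \<Rightarrow> real"
  assumes a: "a \<longlonglongrightarrow> a0" and b: "b \<longlonglongrightarrow> b0"
  shows "(\<lambda>n. log_kernel_pos (a n) (b n)) \<longlonglongrightarrow> log_kernel_pos a0 b0"
proof (cases "a0 = b0")
  case False
  have d: "(\<lambda>n. a n - b n) \<longlonglongrightarrow> a0 - b0" by (intro tendsto_diff a b)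
  hence ev: "eventually (\<lambda>n. a n - b n \<noteq> 0) sequentially"
    using False by (intro tendsto_imp_eventually_ne) auto
  have lim1: "(\<lambda>n. ennreal (max 0 (- ln \<bar>a n - b n\<bar>))) \<longlonglongrightarrow> ennreal (max 0 (- ln \<bar>a0 - b0\<bar>))"
    using False by (intro tendsto_ennrealI tendsto_max tendsto_const tendsto_minus tendsto_ln tendsto_rabs d) auto
  have ev2: "eventually (\<lambda>n. ennreal (max 0 (- ln \<bar>a n - b n\<bar>)) = log_kernel_pos (a n) (b n)) sequentially"
    using ev by (rule eventually_mono) (auto simp: log_kernel_pos_def)
  have "(\<lambda>n. log_kernel_pos (a n) (b n)) \<longlonglongrightarrow> ennreal (max 0 (- ln \<bar>a0 - b0\<bar>))"
    by (rule Lim_transform_eventually[OF lim1 ev2])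
  thus ?thesis using False by (simp add: log_kernel_pos_def)
next
  case True
  have d: "(\<lambda>n. a n - b n) \<longlonglongrightarrow> 0" using tendsto_diff[OF a b] True by simp
  have "(\<lambda>n. log_kernel_pos (a n) (b n)) \<longlonglongrightarrow> \<infinity>"
  proof (rule order_tendstoI)
    fix y :: ennreal assume "y < \<infinity>"
    then obtain r where r: "r \<ge> 0" "y = ennreal r" using less_top_ennreal by auto
    have "eventually (\<lambda>n. norm (a n - b n) < exp (-(r+1))) sequentially"
      using tendstoD[OF d, of "exp (-(r+1))"] by (simp add: dist_norm)
    thus "eventually (\<lambda>n. y < log_kernel_pos (a n) (b n)) sequentially"
    proof (rule eventually_mono)
      fix n assume h: "norm (a n - b n) < exp (-(r+1))"
      show "y < log_kernel_pos (a n) (b n)"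
      proof (cases "a n = b n")
        case True thus ?thesis using r by (simp add: log_kernel_pos_def)
      next
        case False
        hence pos: "\<bar>a n - b n\<bar> > 0" by simp
        have "ln \<bar>a n - b n\<bar> < ln (exp (-(r+1)))" using h pos by (subst ln_less_cancel_iff) auto
        hence "r < max 0 (- ln \<bar>a n - b n\<bar>)" by simp
        thus ?thesis using False r by (simp add: log_kernel_pos_def ennreal_less_iff)
      qed
    qed
  qed simp
  thus ?thesis using True by (simp add: log_kernel_pos_def)
qed

lemma energy_distr:
  assumes P: "prob_space \<Omega>" and Z[measurable]: "Z \<in> borel_measurable \<Omega>"
  shows "energy (distr \<Omega> borel Z) = (\<integral>\<^sup>+p. log_kernel_pos (Z (fst p)) (Z (snd p)) \<partial>(\<Omega> \<Otimes>\<^sub>M \<Omega>))"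
proof -
  interpret prob_space \<Omega> by (rule P)
  have "energy (distr \<Omega> borel Z) = (\<integral>\<^sup>+z. (\<integral>\<^sup>+w. log_kernel_pos z (Z w) \<partial>\<Omega>) \<partial>distr \<Omega> borel Z)"
    unfolding energy_def by (intro nn_integral_cong) (simp add: nn_integral_distr)
  also have "\<dots> = (\<integral>\<^sup>+x. (\<integral>\<^sup>+w. log_kernel_pos (Z x) (Z w) \<partial>\<Omega>) \<partial>\<Omega>)"
  proof -
    have "(\<lambda>p. log_kernel_pos (fst p) (Z (snd p))) \<in> borel_measurable (borel \<Otimes>\<^sub>M \<Omega>)" by measurable
    from borel_measurable_nn_integral_fst[OF this]
    have m: "(\<lambda>z. \<integral>\<^sup>+w. log_kernel_pos z (Z w) \<partial>\<Omega>) \<in> borel_measurable (distr \<Omega> borel Z)" by simp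
    show ?thesis by (rule nn_integral_distr[OF Z m])
  qed
  also have "\<dots> = (\<integral>\<^sup>+p. log_kernel_pos (Z (fst p)) (Z (snd p)) \<partial>(\<Omega> \<Otimes>\<^sub>M \<Omega>))"
  proof -
    have m: "(\<lambda>p. log_kernel_pos (Z (fst p)) (Z (snd p))) \<in> borel_measurable (\<Omega> \<Otimes>\<^sub>M \<Omega>)" by measurable
    show ?thesis using nn_integral_fst[OF m] by simp
  qed
  finally show ?thesis .
qed

lemma energy_lsc:
  assumes rd: "\<And>n. real_distribution (\<nu> n)" and rdm: "real_distribution \<mu>" and wc: "weak_conv_m \<nu> \<mu>"
    and B: "\<And>n. energy (\<nu> n) \<le> B"
  shows "energy \<mu> \<le> B"
proof -
  obtain \<Omega> :: "real measure" and Ys Y where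
    P: "prob_space \<Omega>" and Ysm: "\<And>n. Ys n \<in> measurable \<Omega> borel"
    and Ysd: "\<And>n. distr \<Omega> borel (Ys n) = \<nu> n"
    and Ym: "Y \<in> measurable \<Omega> lborel" and Yd: "distr \<Omega> borel Y = \<mu>"
    and conv: "\<And>x. x \<in> space \<Omega> \<Longrightarrow> (\<lambda>n. Ys n x) \<longlonglongrightarrow> Y x"
    using Skorohod[OF rd rdm wc] by blast
  have Ym': "Y \<in> borel_measurable \<Omega>" using Ym by simp
  note Ysm[measurable]
  have "energy \<mu> = (\<integral>\<^sup>+p. log_kernel_pos (Y (fst p)) (Y (snd p)) \<partial>(\<Omega> \<Otimes>\<^sub>M \<Omega>))"
    using energy_distr[OF P Ym'] Yd by simp
  also have "\<dots> \<le> (\<integral>\<^sup>+p. liminf (\<lambda>n. log_kernel_pos (Ys n (fst p)) (Ys n (snd p))) \<partial>(\<Omega> \<Otimes>\<^sub>M \<Omega>))"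
  proof (rule nn_integral_mono)
    fix p assume "p \<in> space (\<Omega> \<Otimes>\<^sub>M \<Omega>)"
    hence "fst p \<in> space \<Omega>" "snd p \<in> space \<Omega>" by (auto simp: space_pair_measure)
    hence "(\<lambda>n. log_kernel_pos (Ys n (fst p)) (Ys n (snd p))) \<longlonglongrightarrow> log_kernel_pos (Y (fst p)) (Y (snd p))"
      by (intro kpos_tendsto conv)
    thus "log_kernel_pos (Y (fst p)) (Y (snd p)) \<le> liminf (\<lambda>n. log_kernel_pos (Ys n (fst p)) (Ys n (snd p)))"
      by (simp add: lim_imp_Liminf)
  qed
  also have "\<dots> \<le> liminf (\<lambda>n. \<integral>\<^sup>+p. log_kernel_pos (Ys n (fst p)) (Ys n (snd p)) \<partial>(\<Omega> \<Otimes>\<^sub>M \<Omega>))"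
    using Ysm by (intro nn_integral_liminf) measurable
  also have "\<dots> = liminf (\<lambda>n. energy (\<nu> n))"
    using energy_distr[OF P Ysm] Ysd by simp
  also have "\<dots> \<le> limsup (\<lambda>n. energy (\<nu> n))" by (rule Liminf_le_Limsup) simp
  also have "\<dots> \<le> B" using B by (intro Limsup_bounded) auto
  finally show ?thesis .
qed

definition bin :: "nat \<Rightarrow> nat \<Rightarrow> real set" where
  "bin N i = (if i = N - 1 then {real i / real N .. 1} else {real i / real N ..< real (Suc i) / real N})"

definition binJ :: "nat \<Rightarrow> nat \<Rightarrow> real set" where
  "binJ N i = {real i / real N .. real (Suc i) / real N}"

lemma bin_borel[measurable]: "bin N i \<in> sets borel"
  unfolding bin_def by auto

lemma bin_sub_J: "N \<ge> 1 \<Longrightarrow> i < N \<Longrightarrow> bin N i \<subseteq> binJ N i"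
  unfolding bin_def binJ_def by (auto simp: of_nat_diff)

lemma bin_sub01: "N \<ge> 1 \<Longrightarrow> i < N \<Longrightarrow> bin N i \<subseteq> {0..1}"
proof -
  assume N: "N \<ge> 1" and i: "i < N"
  have "real (Suc i) / real N \<le> 1" using N i by (simp add: field_simps)
  moreover have h0: "\<And>x. real i / real N \<le> x \<Longrightarrow> 0 \<le> x"
    by (metis divide_nonneg_nonneg of_nat_0_le_iff order_trans)
  ultimately show ?thesis unfolding bin_def by auto
qed

lemma bin_disj: "N \<ge> 1 \<Longrightarrow> i < N \<Longrightarrow> j < N \<Longrightarrow> i \<noteq> j \<Longrightarrow> bin N i \<inter> bin N j = {}"
proof -
  have *: "bin N i \<inter> bin N j = {}" if "N \<ge> 1" "i < j" "j < N" for i j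
  proof -
    have "i \<noteq> N - 1" using that by auto
    hence "bin N i = {real i / real N ..< real (Suc i) / real N}" by (simp add: bin_def)
    moreover have "bin N j \<subseteq> {real j / real N ..}" unfolding bin_def by auto
    moreover have "real (Suc i) / real N \<le> real j / real N" using that by (intro divide_right_mono) auto
    ultimately show ?thesis by auto
  qed
  assume "N \<ge> 1" "i < N" "j < N" "i \<noteq> j"
  thus ?thesis using *[of i j] *[of j i] by (cases "i < j") (auto simp: Int_commute)
qed

lemma bin_cover: "N \<ge> 1 \<Longrightarrow> y \<in> {0..1} \<Longrightarrow> \<exists>i<N. y \<in> bin N i"
proof -
  assume N: "N \<ge> 1" and y: "y \<in> {0..1}"
  show ?thesis
  proof (cases "y = 1")
    case True
    have "real (N - 1) / real N \<le> 1" using N by (simp add: field_simps)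
    thus ?thesis using True N by (intro exI[of _ "N - 1"]) (auto simp: bin_def)
  next
    case False
    hence y1: "y < 1" using y by auto
    define k where "k = \<lfloor>real N * y\<rfloor>"
    have k0: "k \<ge> 0" using y by (auto simp: k_def)
    have k1: "real_of_int k \<le> real N * y" "real N * y < real_of_int k + 1" unfolding k_def by linarith+
    have "real N * y < real N" using y1 N by simp
    hence kN: "k < int N" using k1 by linarith
    define i where "i = nat k"
    have i: "real i = real_of_int k" "i < N" using k0 kN by (auto simp: i_def)
    have lo: "real i / real N \<le> y" using k1 i N by (simp add: field_simps)
    have hi: "y < real (Suc i) / real N" using k1 i N by (simp add: field_simps)
    show ?thesis using lo hi y1 i(2) by (intro exI[of _ i]) (auto simp: bin_def)
  qed
qed

lemma bin_unique_sum:
  fixes c :: "nat \<Rightarrow> 'a::comm_monoid_add"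
  assumes N: "N \<ge> 1" and i0: "i0 < N" "y \<in> bin N i0"
  shows "(\<Sum>i<N. if y \<in> bin N i then c i else 0) = c i0"
proof -
  have "(\<Sum>i<N. if y \<in> bin N i then c i else 0) = (\<Sum>i\<in>{i0}. if y \<in> bin N i then c i else 0)"
  proof (rule sum.mono_neutral_right)
    show "\<forall>i\<in>{..<N} - {i0}. (if y \<in> bin N i then c i else 0) = 0"
      using bin_disj[OF N] i0 by auto
  qed (use i0 in auto)
  thus ?thesis using i0 by simp
qed

lemma bin_measure: assumes N: "N \<ge> 1" and i: "i < N" shows "emeasure lborel (bin N i) = ennreal (1 / real N)"
proof -
  have le: "real i / real N \<le> real (Suc i) / real N" by (intro divide_right_mono) auto
  have J: "emeasure lborel (binJ N i) = ennreal (1 / real N)"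
    unfolding binJ_def using le by (simp add: diff_divide_distrib[symmetric])
  have "emeasure lborel (bin N i) \<le> emeasure lborel (binJ N i)"
    using bin_sub_J[OF N i] by (intro emeasure_mono) (auto simp: binJ_def)
  moreover have "emeasure lborel (binJ N i) \<le> emeasure lborel (bin N i \<union> {real (Suc i) / real N})"
  proof (rule emeasure_mono)
    show "binJ N i \<subseteq> bin N i \<union> {real (Suc i) / real N}"
    proof
      fix z assume z: "z \<in> binJ N i"
      have "real (Suc i) / real N \<le> 1" using N i by (simp add: field_simps)
      thus "z \<in> bin N i \<union> {real (Suc i) / real N}" using z by (auto simp: bin_def binJ_def)
    qed
  qed simp
  moreover have "emeasure lborel (bin N i \<union> {real (Suc i) / real N}) \<le> emeasure lborel (bin N i) + emeasure lborel {real (Suc i) / real N}"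
    by (rule emeasure_subadditive) auto
  ultimately show ?thesis using J by (auto intro: antisym)
qed

lemma ex_lim_ev: "eventually (\<lambda>y. f y = c) F \<Longrightarrow> \<exists>a. (f \<longlongrightarrow> a) F"
  by (rule exI[of _ c]) (rule tendsto_eventually)

lemma pc_all:
  assumes "piecewise_continuous f"
  shows "\<exists>P. finite P \<and> continuous_on (- P) f \<and>
     (\<forall>p. (\<exists>a. (f \<longlongrightarrow> a) (at_left p)) \<and> (\<exists>b. (f \<longlongrightarrow> b) (at_right p)))"
proof -
  obtain P where P: "finite P" "continuous_on (- P) f"
    "\<forall>p\<in>P. (\<exists>a. (f \<longlongrightarrow> a) (at_left p)) \<and> (\<exists>b. (f \<longlongrightarrow> b) (at_right p))"
    using assms unfolding piecewise_continuous_def by blast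
  have "(\<exists>a. (f \<longlongrightarrow> a) (at_left p)) \<and> (\<exists>b. (f \<longlongrightarrow> b) (at_right p))" for p
  proof (cases "p \<in> P")
    case False
    have "open (- P)" using P(1) by (simp add: finite_imp_closed open_Compl)
    hence "isCont f p" using P(2) False continuous_on_eq_continuous_at by blast
    hence "(f \<longlongrightarrow> f p) (at p)" by (simp add: continuous_at)
    thus ?thesis by (auto intro: tendsto_mono[OF at_within_le_at])
  qed (use P in auto)
  thus ?thesis using P by blast
qed

lemma pc_add:
  assumes "piecewise_continuous f" "piecewise_continuous g"
  shows "piecewise_continuous (\<lambda>x. f x + g x)"
proof -
  obtain P where P: "finite P" "continuous_on (- P) f"
     "\<forall>p. (\<exists>a. (f \<longlongrightarrow> a) (at_left p)) \<and> (\<exists>b. (f \<longlongrightarrow> b) (at_right p))"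
    using pc_all[OF assms(1)] by blast
  obtain Q where Q: "finite Q" "continuous_on (- Q) g"
     "\<forall>p. (\<exists>a. (g \<longlongrightarrow> a) (at_left p)) \<and> (\<exists>b. (g \<longlongrightarrow> b) (at_right p))"
    using pc_all[OF assms(2)] by blast
  show ?thesis unfolding piecewise_continuous_def
  proof (intro exI[of _ "P \<union> Q"] conjI ballI)
    show "finite (P \<union> Q)" using P Q by simp
    show "continuous_on (- (P \<union> Q)) (\<lambda>x. f x + g x)"
      by (intro continuous_on_add continuous_on_subset[OF P(2)] continuous_on_subset[OF Q(2)]) auto
    fix p
    obtain a1 a2 where "(f \<longlongrightarrow> a1) (at_left p)" "(g \<longlongrightarrow> a2) (at_left p)" using P(3) Q(3) by blast
    thus "\<exists>a. ((\<lambda>x. f x + g x) \<longlongrightarrow> a) (at_left p)" by (metis tendsto_add)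
    obtain b1 b2 where "(f \<longlongrightarrow> b1) (at_right p)" "(g \<longlongrightarrow> b2) (at_right p)" using P(3) Q(3) by blast
    thus "\<exists>b. ((\<lambda>x. f x + g x) \<longlongrightarrow> b) (at_right p)" by (metis tendsto_add)
  qed
qed

lemma pc_cmult:
  assumes "piecewise_continuous f"
  shows "piecewise_continuous (\<lambda>x. c * f x)"
proof -
  obtain P where P: "finite P" "continuous_on (- P) f"
     "\<forall>p. (\<exists>a. (f \<longlongrightarrow> a) (at_left p)) \<and> (\<exists>b. (f \<longlongrightarrow> b) (at_right p))"
    using pc_all[OF assms(1)] by blast
  show ?thesis unfolding piecewise_continuous_def
  proof (intro exI[of _ P] conjI ballI)
    show "continuous_on (- P) (\<lambda>x. c * f x)" by (intro continuous_on_mult continuous_on_const P(2))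
    fix p
    obtain a1 where "(f \<longlongrightarrow> a1) (at_left p)" using P(3) by blast
    thus "\<exists>a. ((\<lambda>x. c * f x) \<longlongrightarrow> a) (at_left p)" by (metis tendsto_mult_left)
    obtain b1 where "(f \<longlongrightarrow> b1) (at_right p)" using P(3) by blast
    thus "\<exists>b. ((\<lambda>x. c * f x) \<longlongrightarrow> b) (at_right p)" by (metis tendsto_mult_left)
  qed (use P in auto)
qed

lemma pc_zero: "piecewise_continuous (\<lambda>x. 0)"
  unfolding piecewise_continuous_def by (intro exI[of _ "{}"]) auto

lemma pc_sum:
  assumes "finite I" "\<And>i. i \<in> I \<Longrightarrow> piecewise_continuous (f i)"
  shows "piecewise_continuous (\<lambda>x. \<Sum>i\<in>I. f i x)"
  using assms
proof (induction I rule: finite_induct)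
  case empty thus ?case by (simp add: pc_zero)
next
  case (insert i I)
  thus ?case by (simp add: pc_add)
qed

lemma pc_indicator:
  fixes a b :: real
  assumes ab: "a < b" and A: "{a<..<b} \<subseteq> A" "A \<subseteq> {a..b}"
  shows "piecewise_continuous (indicator A :: real \<Rightarrow> real)"
  unfolding piecewise_continuous_def
proof (intro exI[of _ "{a,b}"] conjI ballI)
  show "finite {a, b}" by simp
  have "isCont (indicator A :: real \<Rightarrow> real) x" if x: "x \<notin> {a,b}" for x
  proof -
    have ev: "eventually (\<lambda>y. (indicator A y :: real) = indicator A x) (at x)"
    proof (cases "x < a")
      case True
      show ?thesis using order_tendstoD(2)[OF tendsto_ident_at[of x UNIV] True]
        by (rule eventually_mono) (use True A in \<open>auto simp: indicator_def\<close>)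
    next
      case False
      show ?thesis
      proof (cases "x < b")
        case True
        have "a < x" using False x by auto
        hence "eventually (\<lambda>y. a < y) (at x)" "eventually (\<lambda>y. y < b) (at x)"
          using order_tendstoD[OF tendsto_ident_at[of x UNIV]] True by auto
        thus ?thesis
          by eventually_elim (use \<open>a < x\<close> True A in \<open>auto simp: indicator_def subset_iff\<close>)
      next
        case False
        hence "b < x" using x by auto
        show ?thesis using order_tendstoD(1)[OF tendsto_ident_at[of x UNIV] \<open>b < x\<close>]
          by (rule eventually_mono) (use \<open>b < x\<close> A in \<open>auto simp: indicator_def\<close>)
      qed
    qed
    show ?thesis unfolding continuous_at by (rule tendsto_eventually[OF ev])
  qed
  thus "continuous_on (- {a, b}) (indicator A :: real \<Rightarrow> real)"
    by (intro continuous_at_imp_continuous_on) auto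
  fix p :: real
  show "\<exists>c. ((indicator A :: real \<Rightarrow> real) \<longlongrightarrow> c) (at_left p)"
  proof (cases "p \<le> a")
    case True
    have "eventually (\<lambda>y. y \<in> {p - 1<..<p}) (at_left p)" by (rule eventually_at_left_real) simp
    hence "eventually (\<lambda>y. (indicator A y :: real) = 0) (at_left p)"
      by (rule eventually_mono) (use True A in \<open>auto simp: indicator_def\<close>)
    thus ?thesis by (rule ex_lim_ev)
  next
    case False
    show ?thesis
    proof (cases "p \<le> b")
      case True
      have "eventually (\<lambda>y. y \<in> {a<..<p}) (at_left p)" using False by (intro eventually_at_left_real) simp
      hence "eventually (\<lambda>y. (indicator A y :: real) = 1) (at_left p)"
        by (rule eventually_mono) (use True A in \<open>auto simp: indicator_def subset_iff\<close>)
      thus ?thesis by (rule ex_lim_ev)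
    next
      case False
      have "eventually (\<lambda>y. y \<in> {b<..<p}) (at_left p)" using False by (intro eventually_at_left_real) simp
      hence "eventually (\<lambda>y. (indicator A y :: real) = 0) (at_left p)"
        by (rule eventually_mono) (use A in \<open>auto simp: indicator_def\<close>)
      thus ?thesis by (rule ex_lim_ev)
    qed
  qed
  show "\<exists>c. ((indicator A :: real \<Rightarrow> real) \<longlongrightarrow> c) (at_right p)"
  proof (cases "p < a")
    case True
    have "eventually (\<lambda>y. y \<in> {p<..<a}) (at_right p)" using True by (intro eventually_at_right_real)
    hence "eventually (\<lambda>y. (indicator A y :: real) = 0) (at_right p)"
      by (rule eventually_mono) (use True A in \<open>auto simp: indicator_def\<close>)
    thus ?thesis by (rule ex_lim_ev)
  next
    case False
    show ?thesis
    proof (cases "p < b")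
      case True
      have "eventually (\<lambda>y. y \<in> {p<..<b}) (at_right p)" using True by (intro eventually_at_right_real)
      hence "eventually (\<lambda>y. (indicator A y :: real) = 1) (at_right p)"
        by (rule eventually_mono) (use False A in \<open>auto simp: indicator_def subset_iff\<close>)
      thus ?thesis by (rule ex_lim_ev)
    next
      case False
      have "eventually (\<lambda>y. y \<in> {p<..<p+1}) (at_right p)" by (intro eventually_at_right_real) simp
      hence "eventually (\<lambda>y. (indicator A y :: real) = 0) (at_right p)"
        by (rule eventually_mono) (use False A in \<open>auto simp: indicator_def\<close>)
      thus ?thesis by (rule ex_lim_ev)
    qed
  qed
qed

lemma pc_bin: assumes N: "N \<ge> 1" and i: "i < N" shows "piecewise_continuous (indicator (bin N i) :: real \<Rightarrow> real)"
proof -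
  have lt: "real i / real N < real (Suc i) / real N" using N by (intro divide_strict_right_mono) auto
  show ?thesis
  proof (cases "i = N - 1")
    case True
    have eq: "real (Suc i) / real N = 1" using True N by simp
    have hb: "bin N i = {real i / real N .. 1}" by (simp add: bin_def True)
    have lt1: "real i / real N < 1" using lt eq by simp
    show ?thesis unfolding hb by (rule pc_indicator[OF lt1]) auto
  next
    case False
    have hb: "bin N i = {real i / real N ..< real (Suc i) / real N}" using False by (simp add: bin_def)
    show ?thesis unfolding hb by (rule pc_indicator[OF lt]) auto
  qed
qed

definition cN :: "real measure \<Rightarrow> nat \<Rightarrow> nat \<Rightarrow> ennreal" where
  "cN \<mu> N i = ennreal (real N * measure \<mu> (bin N i))"

definition FN :: "real measure \<Rightarrow> nat \<Rightarrow> real \<Rightarrow> ennreal" where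
  "FN \<mu> N x = (\<Sum>i<N. cN \<mu> N i * indicator (bin N i) x)"

definition sfN :: "real measure \<Rightarrow> nat \<Rightarrow> real \<Rightarrow> real" where
  "sfN \<mu> N x = (\<Sum>i<N. real N * measure \<mu> (bin N i) * indicator (bin N i) x)"

definition \<nu>N :: "real measure \<Rightarrow> nat \<Rightarrow> real measure" where
  "\<nu>N \<mu> N = density lborel (FN \<mu> N)"

lemma FN_measurable[measurable]: "FN \<mu> N \<in> borel_measurable borel"
  unfolding FN_def by measurable

lemma sfN_nonneg: "0 \<le> sfN \<mu> N x"
  unfolding sfN_def by (intro sum_nonneg) auto

lemma FN_eq: "ennreal (sfN \<mu> N x) = FN \<mu> N x"
proof -
  have "ennreal (sfN \<mu> N x) = (\<Sum>i<N. ennreal (real N * measure \<mu> (bin N i) * indicator (bin N i) x))"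
    unfolding sfN_def by (subst sum_ennreal) auto
  also have "\<dots> = FN \<mu> N x"
    unfolding FN_def cN_def by (intro sum.cong refl) (auto simp: indicator_def)
  finally show ?thesis .
qed

lemma \<nu>N_pc: assumes N: "N \<ge> 1" shows "has_pc_density (\<nu>N \<mu> N)"
  unfolding has_pc_density_def
proof (intro exI[of _ "sfN \<mu> N"] conjI allI)
  show "0 \<le> sfN \<mu> N x" for x by (rule sfN_nonneg)
  show "sfN \<mu> N \<in> borel_measurable borel" unfolding sfN_def by measurable
  show "piecewise_continuous (sfN \<mu> N)"
    unfolding sfN_def using N by (intro pc_sum pc_cmult pc_bin) auto
  show "\<nu>N \<mu> N = density lborel (\<lambda>x. ennreal (sfN \<mu> N x))"
    unfolding \<nu>N_def FN_eq by simp
qed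

lemma FN_zero: assumes N: "N \<ge> 1" and x: "x \<notin> {0..1}" shows "FN \<mu> N x = 0"
  unfolding FN_def
proof (intro sum.neutral ballI)
  fix i assume "i \<in> {..<N}"
  hence "x \<notin> bin N i" using bin_sub01[OF N, of i] x by auto
  thus "cN \<mu> N i * indicator (bin N i) x = 0" by simp
qed

lemma \<nu>N_supp: assumes N: "N \<ge> 1" shows "measure_support (\<nu>N \<mu> N) \<subseteq> {0..1}"
proof
  fix x assume x: "x \<in> measure_support (\<nu>N \<mu> N)"
  show "x \<in> {0..1}"
  proof (rule ccontr)
    assume nx: "x \<notin> {0..1}"
    have "open (- {0..1::real})" by auto
    then obtain e where e: "e > 0" "ball x e \<subseteq> - {0..1}" using nx open_contains_ball by blast
    have "emeasure (\<nu>N \<mu> N) (ball x e) = (\<integral>\<^sup>+y. FN \<mu> N y * indicator (ball x e) y \<partial>lborel)"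
      unfolding \<nu>N_def by (rule emeasure_density) auto
    also have "\<dots> = 0"
    proof -
      have "FN \<mu> N y * indicator (ball x e) y = 0" for y
        using e FN_zero[OF N, of y] by (cases "y \<in> ball x e") auto
      hence "(\<lambda>y. FN \<mu> N y * indicator (ball x e) y) = (\<lambda>y. 0)" by (rule ext)
      thus ?thesis by simp
    qed
    finally have "emeasure (\<nu>N \<mu> N) (ball x e) = 0" by simp
    thus False using x e unfolding measure_support_def by auto
  qed
qed

lemma \<nu>N_prob:
  assumes N: "N \<ge> 1" and P: "prob_space \<mu>" and sM: "sets \<mu> = sets borel" and AE: "AE x in \<mu>. x \<in> {0..1}"
  shows "prob_space (\<nu>N \<mu> N)"
proof (rule prob_spaceI)
  interpret prob_space \<mu> by (rule P)
  have "emeasure (\<nu>N \<mu> N) (space (\<nu>N \<mu> N)) = (\<integral>\<^sup>+y. FN \<mu> N y \<partial>lborel)"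
    unfolding \<nu>N_def by (simp add: emeasure_density)
  also have "\<dots> = (\<Sum>i<N. \<integral>\<^sup>+y. cN \<mu> N i * indicator (bin N i) y \<partial>lborel)"
    unfolding FN_def by (rule nn_integral_sum) auto
  also have "\<dots> = (\<Sum>i<N. cN \<mu> N i * ennreal (1 / real N))"
    using N by (intro sum.cong refl) (simp add: nn_integral_cmult_indicator bin_measure)
  also have "\<dots> = (\<Sum>i<N. ennreal (measure \<mu> (bin N i)))"
    using N by (intro sum.cong refl) (simp add: cN_def ennreal_mult[symmetric])
  also have "\<dots> = ennreal (\<Sum>i<N. measure \<mu> (bin N i))" by simp
  also have "(\<Sum>i<N. measure \<mu> (bin N i)) = measure \<mu> (\<Union>i<N. bin N i)"
    using bin_disj[OF N] sM
    by (intro finite_measure_finite_Union[symmetric]) (auto simp: disjoint_family_on_def)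
  also have "(\<Union>i<N. bin N i) = {0..1}"
    using bin_cover[OF N] bin_sub01[OF N] by blast
  also have "measure \<mu> {0..1} = 1" using AE sM by (subst prob_eq_1) auto
  finally show "emeasure (\<nu>N \<mu> N) (space (\<nu>N \<mu> N)) = 1" by simp
qed

definition AN :: "nat \<Rightarrow> nat \<Rightarrow> nat \<Rightarrow> ennreal" where
  "AN N i j = (\<integral>\<^sup>+p. indicator (bin N i) (fst p) * indicator (bin N j) (snd p) *
       log_kernel_pos (fst p) (snd p) \<partial>(lborel \<Otimes>\<^sub>M lborel))"

definition GN :: "nat \<Rightarrow> real \<times> real \<Rightarrow> ennreal" where
  "GN N p = (\<Sum>i<N. \<Sum>j<N. (of_nat N ^ 2 * AN N i j) * indicator (bin N i \<times> bin N j) p)"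

lemma GN_measurable[measurable]: "GN N \<in> borel_measurable (M \<Otimes>\<^sub>M M')"
  if "sets M = sets borel" "sets M' = sets borel"
proof -
  have "(bin N i \<times> bin N j) \<in> sets (M \<Otimes>\<^sub>M M')" for i j
    using that by (simp add: sets_pair_measure_cong[OF that] )
  thus ?thesis unfolding GN_def by measurable
qed

lemma energy_\<nu>N:
  assumes N: "N \<ge> 1" and P: "prob_space (\<nu>N \<mu> N)"
  shows "energy (\<nu>N \<mu> N) = (\<Sum>i<N. \<Sum>j<N. cN \<mu> N i * cN \<mu> N j * AN N i j)"
proof -
  let ?\<nu> = "\<nu>N \<mu> N"
  interpret \<nu>: prob_space ?\<nu> by (rule P)
  have s\<nu>: "sets ?\<nu> = sets borel" by (simp add: \<nu>N_def)
  have "energy ?\<nu> = (\<integral>\<^sup>+p. log_kernel_pos (fst p) (snd p) \<partial>(?\<nu> \<Otimes>\<^sub>M ?\<nu>))"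
    unfolding energy_def using \<nu>.nn_integral_fst[OF measurable_kpos'[OF s\<nu> s\<nu>]] by simp
  also have "?\<nu> \<Otimes>\<^sub>M ?\<nu> = density (lborel \<Otimes>\<^sub>M lborel) (\<lambda>(x,y). FN \<mu> N x * FN \<mu> N y)"
    unfolding \<nu>N_def
    by (rule pair_measure_density) (auto simp: \<nu>N_def[symmetric] intro: lborel.sigma_finite_measure_axioms \<nu>.sigma_finite_measure_axioms)
  also have "(\<integral>\<^sup>+p. log_kernel_pos (fst p) (snd p) \<partial>density (lborel \<Otimes>\<^sub>M lborel) (\<lambda>(x,y). FN \<mu> N x * FN \<mu> N y))
      = (\<integral>\<^sup>+p. (\<lambda>(x,y). FN \<mu> N x * FN \<mu> N y) p * log_kernel_pos (fst p) (snd p) \<partial>(lborel \<Otimes>\<^sub>M lborel))"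
    by (rule nn_integral_density) (auto intro: measurable_kpos')
  also have "\<dots> = (\<integral>\<^sup>+p. (\<Sum>i<N. \<Sum>j<N. cN \<mu> N i * cN \<mu> N j * (indicator (bin N i) (fst p) * indicator (bin N j) (snd p) *
       log_kernel_pos (fst p) (snd p))) \<partial>(lborel \<Otimes>\<^sub>M lborel))"
  proof (intro nn_integral_cong)
    fix p :: "real \<times> real"
    obtain x y where p: "p = (x,y)" by (cases p)
    have "FN \<mu> N x * FN \<mu> N y * log_kernel_pos x y = (\<Sum>i<N. \<Sum>j<N. cN \<mu> N i * cN \<mu> N j *
       (indicator (bin N i) x * indicator (bin N j) y * log_kernel_pos x y))"
      unfolding FN_def sum_product sum_distrib_right
      by (intro sum.cong refl) (simp add: mult_ac sum_distrib_left del: Bochner_Integration.sum_mult_indicator Indicator_Function.sum_mult_indicator Bochner_Integration.sum_indicator_mult Indicator_Function.sum_indicator_mult)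
    thus "(\<lambda>(x,y). FN \<mu> N x * FN \<mu> N y) p * log_kernel_pos (fst p) (snd p) = (\<Sum>i<N. \<Sum>j<N. cN \<mu> N i * cN \<mu> N j *
       (indicator (bin N i) (fst p) * indicator (bin N j) (snd p) * log_kernel_pos (fst p) (snd p)))"
      by (simp add: p)
  qed
  also have "\<dots> = (\<Sum>i<N. \<Sum>j<N. cN \<mu> N i * cN \<mu> N j * AN N i j)"
    unfolding AN_def
    apply (subst nn_integral_sum)
     apply (auto intro!: measurable_kpos')[2]
    apply (intro sum.cong refl)
    apply (subst nn_integral_sum)
     apply (auto intro!: measurable_kpos')[2]
    apply (intro sum.cong refl)
    apply (subst nn_integral_cmult)
     apply (auto intro!: measurable_kpos')
    done
  finally show ?thesis .
qed

lemma GN_integral: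
  assumes N: "N \<ge> 1" and P: "prob_space \<mu>" and sM: "sets \<mu> = sets borel"
  shows "(\<integral>\<^sup>+p. GN N p \<partial>(\<mu> \<Otimes>\<^sub>M \<mu>)) = (\<Sum>i<N. \<Sum>j<N. cN \<mu> N i * cN \<mu> N j * AN N i j)"
proof -
  interpret prob_space \<mu> by (rule P)
  have bs: "bin N i \<in> sets \<mu>" for i using sM by simp
  have c: "cN \<mu> N i = of_nat N * emeasure \<mu> (bin N i)" for i
    by (simp add: cN_def emeasure_eq_measure ennreal_mult ennreal_of_nat_eq_real_of_nat)
  have "(\<integral>\<^sup>+p. GN N p \<partial>(\<mu> \<Otimes>\<^sub>M \<mu>)) =
      (\<Sum>i<N. \<Sum>j<N. (of_nat N ^ 2 * AN N i j) * emeasure (\<mu> \<Otimes>\<^sub>M \<mu>) (bin N i \<times> bin N j))"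
  proof -
    have [measurable]: "bin N i \<times> bin N j \<in> sets (\<mu> \<Otimes>\<^sub>M \<mu>)" for i j
      by (simp add: sets_pair_measure_cong[OF sM sM])
    have "(\<integral>\<^sup>+p. GN N p \<partial>(\<mu> \<Otimes>\<^sub>M \<mu>)) = (\<Sum>i<N. \<integral>\<^sup>+p. (\<Sum>j<N. (of_nat N ^ 2 * AN N i j) * indicator (bin N i \<times> bin N j) p) \<partial>(\<mu> \<Otimes>\<^sub>M \<mu>))"
      unfolding GN_def by (rule nn_integral_sum) measurable
    also have "\<dots> = (\<Sum>i<N. \<Sum>j<N. \<integral>\<^sup>+p. (of_nat N ^ 2 * AN N i j) * indicator (bin N i \<times> bin N j) p \<partial>(\<mu> \<Otimes>\<^sub>M \<mu>))"
      by (intro sum.cong refl nn_integral_sum) measurable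
    also have "\<dots> = (\<Sum>i<N. \<Sum>j<N. (of_nat N ^ 2 * AN N i j) * emeasure (\<mu> \<Otimes>\<^sub>M \<mu>) (bin N i \<times> bin N j))"
      by (intro sum.cong refl nn_integral_cmult_indicator) measurable
    finally show ?thesis .
  qed
  also have "\<dots> = (\<Sum>i<N. \<Sum>j<N. cN \<mu> N i * cN \<mu> N j * AN N i j)"
    by (intro sum.cong refl) (simp add: emeasure_pair_measure_Times bs c power2_eq_square mult_ac)
  finally show ?thesis .
qed

lemma neg_ln_le_powr: fixes x :: real assumes x: "0 < x" "x \<le> 1" shows "- ln x \<le> x powr (-1/2)"
proof -
  define y where "y = x powr (-1/4)"
  have y0: "y > 0" using x by (simp add: y_def)
  have lny: "ln y = -1/4 * ln x" using x by (simp add: y_def ln_powr)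
  have "ln y \<le> y - 1" using y0 by (rule ln_le_minus_one)
  hence "- ln x \<le> 4 * y - 4" using lny by simp
  also have "\<dots> \<le> y * y" using sum_squares_ge_zero[of "y - 2" 0] by (simp add: algebra_simps power2_eq_square)
  also have "y * y = x powr (-1/2)" using x by (simp add: y_def powr_add[symmetric])
  finally show ?thesis .
qed

definition gpw :: "real \<Rightarrow> real" where "gpw t = (if t \<in> {0..1} then t powr (-1/2) else 0)"

lemma gpw_nonneg: "0 \<le> gpw t" by (simp add: gpw_def)

lemma gpw_measurable[measurable]: "gpw \<in> borel_measurable borel"
  unfolding gpw_def by measurable

lemma gpw_integral: "(\<integral>\<^sup>+t. ennreal (gpw t) \<partial>lborel) = 2"
proof -
  have "((\<lambda>x::real. x powr (-1/2)) has_integral (1 powr (-1/2+1) / (-1/2+1))) {0..1}"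
    by (rule has_integral_powr_from_0) auto
  hence "((\<lambda>x::real. x powr (-1/2)) has_integral 2) {0..1}" by simp
  hence "(gpw has_integral 2) UNIV" unfolding gpw_def has_integral_restrict_UNIV .
  thus ?thesis using nn_integral_has_integral_lborel[OF gpw_measurable gpw_nonneg] by simp
qed

definition C0 :: ennreal where "C0 = (\<integral>\<^sup>+t. log_kernel_pos 0 t \<partial>lborel)"

lemma kpos0_measurable[measurable]: "log_kernel_pos 0 \<in> borel_measurable borel"
  by measurable

lemma C0_finite: "C0 < \<infinity>"
proof -
  have "C0 \<le> (\<integral>\<^sup>+t. ennreal (gpw t) + ennreal (gpw (-t)) \<partial>lborel)"
    unfolding C0_def
  proof (rule nn_integral_mono_AE)
    show "AE t in lborel. log_kernel_pos 0 t \<le> ennreal (gpw t) + ennreal (gpw (-t))"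
      using AE_lborel_singleton[of 0]
    proof (rule eventually_mono)
      fix t :: real assume t: "t \<noteq> 0"
      show "log_kernel_pos 0 t \<le> ennreal (gpw t) + ennreal (gpw (-t))"
      proof (cases "\<bar>t\<bar> \<le> 1")
        case False
        hence "ln \<bar>t\<bar> \<ge> 0" by simp
        hence "log_kernel_pos 0 t = 0" using t by (simp add: log_kernel_pos_def max_def)
        thus ?thesis by simp
      next
        case True
        have "- ln \<bar>t\<bar> \<le> \<bar>t\<bar> powr (-1/2)" using t True by (intro neg_ln_le_powr) auto
        moreover have "\<bar>t\<bar> powr (-1/2) = gpw t + gpw (-t)" using t True by (auto simp: gpw_def)
        moreover have "0 \<le> \<bar>t\<bar> powr (-1/2)" by simp
        ultimately have "max 0 (- ln \<bar>t\<bar>) \<le> gpw t + gpw (-t)" by linarith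
        hence "ennreal (max 0 (- ln \<bar>t\<bar>)) \<le> ennreal (gpw t + gpw (-t))" by (rule ennreal_leI)
        thus ?thesis using t by (simp add: log_kernel_pos_def gpw_nonneg)
      qed
    qed
  qed
  also have "\<dots> = (\<integral>\<^sup>+t. ennreal (gpw t) \<partial>lborel) + (\<integral>\<^sup>+t. ennreal (gpw (-t)) \<partial>lborel)"
    by (rule nn_integral_add) auto
  also have "(\<integral>\<^sup>+t. ennreal (gpw (-t)) \<partial>lborel) = (\<integral>\<^sup>+t. ennreal (gpw t) \<partial>lborel)"
    using nn_integral_real_affine[of "\<lambda>t. ennreal (gpw t)" "-1" 0] by simp
  finally have "C0 \<le> 2 + 2" using gpw_integral by simp
  thus ?thesis by (rule le_less_trans) simp
qed

lemma Nsq_one: assumes N: "N \<ge> 1" shows "of_nat N ^ 2 * (ennreal (1 / real N) * ennreal (1 / real N)) = (1::ennreal)"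
proof -
  have "(of_nat N :: ennreal) = ennreal (real N)" by (simp add: ennreal_of_nat_eq_real_of_nat)
  hence "of_nat N ^ 2 * (ennreal (1 / real N) * ennreal (1 / real N)) = ennreal (real N ^ 2 * (1 / real N * (1 / real N)))"
    by (simp add: ennreal_mult[symmetric] ennreal_power)
  also have "real N ^ 2 * (1 / real N * (1 / real N)) = 1" using N by (simp add: field_simps power2_eq_square)
  finally show ?thesis by simp
qed

lemma binJ_measure: "emeasure lborel (binJ N i) = ennreal (1 / real N)"
proof -
  have le: "real i / real N \<le> real (Suc i) / real N" by (intro divide_right_mono) auto
  thus ?thesis unfolding binJ_def using le by (simp add: diff_divide_distrib[symmetric])
qed

lemma binJ_borel[measurable]: "binJ N i \<in> sets borel" unfolding binJ_def by simp

lemma AN_le_const: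
  assumes N: "N \<ge> 1" and i: "i < N" and j: "j < N"
    and c: "\<And>z w. z \<in> binJ N i \<Longrightarrow> w \<in> binJ N j \<Longrightarrow> log_kernel_pos z w \<le> c"
  shows "of_nat N ^ 2 * AN N i j \<le> c"
proof -
  have "AN N i j \<le> (\<integral>\<^sup>+p. c * indicator (binJ N i \<times> binJ N j) p \<partial>(lborel \<Otimes>\<^sub>M lborel))"
    unfolding AN_def
  proof (rule nn_integral_mono)
    fix p :: "real \<times> real"
    show "indicator (bin N i) (fst p) * indicator (bin N j) (snd p) * log_kernel_pos (fst p) (snd p)
        \<le> c * indicator (binJ N i \<times> binJ N j) p"
      using c[of "fst p" "snd p"] bin_sub_J[OF N i] bin_sub_J[OF N j]
      by (cases p) (auto simp: indicator_def)
  qed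
  also have "\<dots> = c * (ennreal (1 / real N) * ennreal (1 / real N))"
    by (subst nn_integral_cmult_indicator) (auto simp: lborel.emeasure_pair_measure_Times binJ_measure)
  finally have "of_nat N ^ 2 * AN N i j \<le> of_nat N ^ 2 * (c * (ennreal (1 / real N) * ennreal (1 / real N)))"
    by (rule mult_left_mono) simp
  also have "\<dots> = c" using Nsq_one[OF N] by (simp add: mult_ac)
  finally show ?thesis .
qed

lemma kpos_scale:
  assumes N: "N \<ge> 1"
  shows "log_kernel_pos z w \<le> ennreal (ln (real N)) + log_kernel_pos 0 (real N * w - real N * z)"
proof (cases "z = w")
  case True thus ?thesis by (simp add: log_kernel_pos_def)
next
  case False
  have Npos: "real N > 0" using N by simp
  have ne: "real N * w - real N * z \<noteq> 0" using False Npos by (simp add: algebra_simps)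
  have lnN: "ln (real N) \<ge> 0" using N by simp
  have eq: "ln \<bar>0 - (real N * w - real N * z)\<bar> = ln (real N) + ln \<bar>z - w\<bar>"
  proof -
    have "0 - (real N * w - real N * z) = real N * (z - w)" by (simp add: algebra_simps)
    hence "\<bar>0 - (real N * w - real N * z)\<bar> = real N * \<bar>z - w\<bar>" by (simp only: abs_mult)
    thus ?thesis using Npos False by (simp add: ln_mult)
  qed
  have "max 0 (- ln \<bar>z - w\<bar>) \<le> ln (real N) + max 0 (- ln \<bar>0 - (real N * w - real N * z)\<bar>)"
    unfolding eq using lnN by linarith
  hence "ennreal (max 0 (- ln \<bar>z - w\<bar>)) \<le> ennreal (ln (real N) + max 0 (- ln \<bar>0 - (real N * w - real N * z)\<bar>))"
    by (rule ennreal_leI)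
  also have "\<dots> = ennreal (ln (real N)) + ennreal (max 0 (- ln \<bar>0 - (real N * w - real N * z)\<bar>))"
    using lnN by (simp add: ennreal_plus)
  finally show ?thesis using False ne by (simp add: log_kernel_pos_def)
qed

lemma AN_le_near:
  assumes N: "N \<ge> 1" and i: "i < N" and j: "j < N"
  shows "of_nat N ^ 2 * AN N i j \<le> ennreal (ln (real N)) + C0"
proof -
  let ?K = "ennreal (1 / real N) * (ennreal (ln (real N)) + C0)"
  have Npos: "real N > 0" using N by simp
  have X: "(\<integral>\<^sup>+w. log_kernel_pos 0 (real N * w - real N * z) \<partial>lborel) = ennreal (1 / real N) * C0" for z
  proof -
    have "C0 = ennreal (real N) * (\<integral>\<^sup>+w. log_kernel_pos 0 (real N * w - real N * z) \<partial>lborel)"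
      unfolding C0_def using nn_integral_real_affine[OF kpos0_measurable, of "real N" "- (real N * z)"] Npos by simp
    hence "ennreal (1 / real N) * C0 = ennreal (1 / real N) * ennreal (real N) * (\<integral>\<^sup>+w. log_kernel_pos 0 (real N * w - real N * z) \<partial>lborel)"
      by (simp add: mult.assoc)
    also have "ennreal (1 / real N) * ennreal (real N) = 1" using Npos by (simp add: ennreal_mult[symmetric])
    finally show ?thesis by simp
  qed
  have inner: "(\<integral>\<^sup>+w. indicator (bin N j) w * log_kernel_pos z w \<partial>lborel) \<le> ?K" for z
  proof -
    have "(\<integral>\<^sup>+w. indicator (bin N j) w * log_kernel_pos z w \<partial>lborel)
        \<le> (\<integral>\<^sup>+w. ennreal (ln (real N)) * indicator (bin N j) w + log_kernel_pos 0 (real N * w - real N * z) \<partial>lborel)"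
    proof (rule nn_integral_mono)
      fix w
      show "indicator (bin N j) w * log_kernel_pos z w \<le> ennreal (ln (real N)) * indicator (bin N j) w + log_kernel_pos 0 (real N * w - real N * z)"
        using kpos_scale[OF N, of z w] by (cases "w \<in> bin N j") auto
    qed
    also have "\<dots> = ennreal (ln (real N)) * ennreal (1 / real N) + ennreal (1 / real N) * C0"
      by (subst nn_integral_add) (auto simp: nn_integral_cmult_indicator bin_measure[OF N j] X)
    also have "\<dots> = ?K" by (simp add: distrib_left mult_ac)
    finally show ?thesis .
  qed
  have "AN N i j = (\<integral>\<^sup>+z. \<integral>\<^sup>+w. indicator (bin N i) z * indicator (bin N j) w * log_kernel_pos z w \<partial>lborel \<partial>lborel)"
    unfolding AN_def by (subst lborel.nn_integral_fst[symmetric]) (auto intro: measurable_kpos')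
  also have "\<dots> = (\<integral>\<^sup>+z. indicator (bin N i) z * (\<integral>\<^sup>+w. indicator (bin N j) w * log_kernel_pos z w \<partial>lborel) \<partial>lborel)"
    by (intro nn_integral_cong) (subst nn_integral_cmult[symmetric], auto simp: mult.assoc)
  also have "\<dots> \<le> (\<integral>\<^sup>+z. ?K * indicator (bin N i) z \<partial>lborel)"
    by (intro nn_integral_mono) (use inner in \<open>auto simp: indicator_def\<close>)
  also have "\<dots> = ?K * ennreal (1 / real N)"
    by (subst nn_integral_cmult_indicator) (auto simp: bin_measure[OF N i])
  finally have "of_nat N ^ 2 * AN N i j \<le> of_nat N ^ 2 * (?K * ennreal (1 / real N))"
    by (rule mult_left_mono) simp
  also have "\<dots> = (of_nat N ^ 2 * (ennreal (1 / real N) * ennreal (1 / real N))) * (ennreal (ln (real N)) + C0)"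
    by (simp add: mult_ac)
  also have "\<dots> = ennreal (ln (real N)) + C0" using Nsq_one[OF N] by simp
  finally show ?thesis .
qed

lemma binJ_close: assumes "z \<in> binJ N i" "y \<in> binJ N i" shows "\<bar>z - y\<bar> \<le> 1 / real N"
proof -
  have "real (Suc i) / real N - real i / real N = 1 / real N" by (simp add: diff_divide_distrib[symmetric])
  thus ?thesis using assms unfolding binJ_def by auto
qed

lemma AN_le_far:
  assumes N: "N \<ge> 1" and i: "i < N" and j: "j < N" and y: "y \<in> bin N i" and y': "y' \<in> bin N j"
    and d: "2 / real N < \<bar>y - y'\<bar>"
  shows "of_nat N ^ 2 * AN N i j \<le> ennreal (max 0 (- ln (\<bar>y - y'\<bar> - 2 / real N)))"
proof (rule AN_le_const[OF N i j])
  fix z w assume z: "z \<in> binJ N i" and w: "w \<in> binJ N j"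
  have "\<bar>z - y\<bar> \<le> 1 / real N" using binJ_close[OF z] bin_sub_J[OF N i] y by auto
  moreover have "\<bar>w - y'\<bar> \<le> 1 / real N" using binJ_close[OF w] bin_sub_J[OF N j] y' by auto
  ultimately have zw: "\<bar>y - y'\<bar> - 2 / real N \<le> \<bar>z - w\<bar>" by linarith
  have pos: "0 < \<bar>y - y'\<bar> - 2 / real N" using d by simp
  hence ne: "z \<noteq> w" using zw by auto
  have "ln (\<bar>y - y'\<bar> - 2 / real N) \<le> ln \<bar>z - w\<bar>" using zw pos by (subst ln_le_cancel_iff) auto
  hence "max 0 (- ln \<bar>z - w\<bar>) \<le> max 0 (- ln (\<bar>y - y'\<bar> - 2 / real N))" by linarith
  hence "ennreal (max 0 (- ln \<bar>z - w\<bar>)) \<le> ennreal (max 0 (- ln (\<bar>y - y'\<bar> - 2 / real N)))"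
    by (rule ennreal_leI)
  thus "log_kernel_pos z w \<le> ennreal (max 0 (- ln (\<bar>y - y'\<bar> - 2 / real N)))"
    using ne by (simp add: log_kernel_pos_def)
qed

lemma GN_at:
  assumes N: "N \<ge> 1" and i0: "i0 < N" "y \<in> bin N i0" and j0: "j0 < N" "y' \<in> bin N j0"
  shows "GN N (y, y') = of_nat N ^ 2 * AN N i0 j0"
proof -
  have "GN N (y, y') = (\<Sum>i<N. if y \<in> bin N i then (\<Sum>j<N. if y' \<in> bin N j then of_nat N ^ 2 * AN N i j else 0) else 0)"
    unfolding GN_def
  proof (intro sum.cong refl)
    fix i assume "i \<in> {..<N}"
    show "(\<Sum>j<N. of_nat N ^ 2 * AN N i j * indicator (bin N i \<times> bin N j) (y, y')) =
      (if y \<in> bin N i then (\<Sum>j<N. if y' \<in> bin N j then of_nat N ^ 2 * AN N i j else 0) else 0)"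
    proof (cases "y \<in> bin N i")
      case True
      have "(\<Sum>j<N. of_nat N ^ 2 * AN N i j * indicator (bin N i \<times> bin N j) (y, y')) =
          (\<Sum>j<N. if y' \<in> bin N j then of_nat N ^ 2 * AN N i j else 0)"
        by (intro sum.cong refl) (simp add: indicator_def True)
      thus ?thesis using True by simp
    next
      case False
      have "(\<Sum>j<N. of_nat N ^ 2 * AN N i j * indicator (bin N i \<times> bin N j) (y, y')) = (\<Sum>j<N. 0)"
        by (intro sum.cong refl) (simp add: indicator_def False)
      thus ?thesis using False by simp
    qed
  qed
  also have "\<dots> = (\<Sum>j<N. if y' \<in> bin N j then of_nat N ^ 2 * AN N i0 j else 0)"
    by (rule bin_unique_sum[OF N i0])
  also have "\<dots> = of_nat N ^ 2 * AN N i0 j0"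
    by (rule bin_unique_sum[OF N j0])
  finally show ?thesis .
qed

lemma GN_out:
  assumes N: "N \<ge> 1" and out: "y \<notin> {0..1} \<or> y' \<notin> {0..1}"
  shows "GN N (y, y') = 0"
  unfolding GN_def
proof (intro sum.neutral ballI)
  fix i j assume "i \<in> {..<N}" "j \<in> {..<N}"
  hence "(y, y') \<notin> bin N i \<times> bin N j" using bin_sub01[OF N, of i] bin_sub01[OF N, of j] out by auto
  thus "of_nat N ^ 2 * AN N i j * indicator (bin N i \<times> bin N j) (y, y') = 0" by simp
qed

lemma GN_bound:
  assumes N: "N \<ge> 1"
  shows "GN N (y, y') \<le> log_kernel_pos y y' + ennreal (ln 3) + C0"
proof (cases "y \<in> {0..1} \<and> y' \<in> {0..1}")
  case False thus ?thesis using GN_out[OF N] by auto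
next
  case True
  obtain i0 where i0: "i0 < N" "y \<in> bin N i0" using bin_cover[OF N] True by blast
  obtain j0 where j0: "j0 < N" "y' \<in> bin N j0" using bin_cover[OF N] True by blast
  have G: "GN N (y, y') = of_nat N ^ 2 * AN N i0 j0" by (rule GN_at[OF N i0 j0])
  show ?thesis
  proof (cases "y = y'")
    case True thus ?thesis by (simp add: log_kernel_pos_def)
  next
    case False
    define d where "d = \<bar>y - y'\<bar>"
    have d0: "d > 0" using False by (simp add: d_def)
    have Npos: "real N > 0" using N by simp
    have Kp: "log_kernel_pos y y' = ennreal (max 0 (- ln d))" using False by (simp add: log_kernel_pos_def d_def)
    show ?thesis
    proof (cases "3 / real N \<le> d")
      case True
      have d2: "2 / real N < d" using True Npos by (smt (verit) divide_strict_right_mono)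
      have "d / 3 \<le> d - 2 / real N" using True by (simp add: field_simps)
      moreover have "0 < d / 3" using d0 by simp
      ultimately have "ln (d / 3) \<le> ln (d - 2 / real N)" by (subst ln_le_cancel_iff) auto
      moreover have "ln (d / 3) = ln d - ln 3" using d0 by (simp add: ln_div)
      moreover have "ln 3 \<ge> (0::real)" by simp
      ultimately have "max 0 (- ln (d - 2 / real N)) \<le> max 0 (- ln d) + ln 3" by linarith
      hence "ennreal (max 0 (- ln (d - 2 / real N))) \<le> ennreal (max 0 (- ln d) + ln 3)"
        by (rule ennreal_leI)
      also have "\<dots> = ennreal (max 0 (- ln d)) + ennreal (ln 3)" by (rule ennreal_plus) auto
      finally have "ennreal (max 0 (- ln (d - 2 / real N))) \<le> ennreal (max 0 (- ln d)) + ennreal (ln 3)" .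
      moreover have "GN N (y, y') \<le> ennreal (max 0 (- ln (d - 2 / real N)))"
        unfolding G d_def using AN_le_far[OF N i0(1) j0(1) i0(2) j0(2)] d2 by (simp add: d_def)
      ultimately have "GN N (y, y') \<le> log_kernel_pos y y' + ennreal (ln 3)" unfolding Kp by (rule order_trans[rotated])
      also have "\<dots> \<le> log_kernel_pos y y' + ennreal (ln 3) + C0" by simp
      finally show ?thesis .
    next
      case False
      hence "ln d < ln (3 / real N)" using d0 Npos by (subst ln_less_cancel_iff) auto
      also have "ln (3 / real N) = ln 3 - ln (real N)" using Npos by (simp add: ln_div)
      finally have "ln (real N) \<le> max 0 (- ln d) + ln 3" by linarith
      hence "ennreal (ln (real N)) \<le> ennreal (max 0 (- ln d) + ln 3)"
        by (rule ennreal_leI)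
      also have "\<dots> = ennreal (max 0 (- ln d)) + ennreal (ln 3)" by (rule ennreal_plus) auto
      finally have "ennreal (ln (real N)) \<le> ennreal (max 0 (- ln d)) + ennreal (ln 3)" .
      hence "ennreal (ln (real N)) + C0 \<le> log_kernel_pos y y' + ennreal (ln 3) + C0"
        unfolding Kp by (rule add_right_mono)
      moreover have "GN N (y, y') \<le> ennreal (ln (real N)) + C0"
        unfolding G by (rule AN_le_near[OF N i0(1) j0(1)])
      ultimately show ?thesis by (rule order_trans[rotated])
    qed
  qed
qed

lemma GN_limsup:
  assumes ne: "y \<noteq> y'"
  shows "limsup (\<lambda>n. GN (Suc n) (y, y')) \<le> log_kernel_pos y y'"
proof -
  define d where "d = \<bar>y - y'\<bar>"
  have d0: "d > 0" using ne by (simp add: d_def)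
  define h where "h n = ennreal (max 0 (- ln (d - 2 / real (Suc n))))" for n
  have lim2: "(\<lambda>n. 2 / real (Suc n)) \<longlonglongrightarrow> 0"
    using LIMSEQ_Suc[OF lim_const_over_n[of 2]] by simp
  have ev: "eventually (\<lambda>n. 2 / real (Suc n) < d) sequentially"
    using order_tendstoD(2)[OF lim2 d0] .
  have "eventually (\<lambda>n. GN (Suc n) (y, y') \<le> h n) sequentially"
    using ev
  proof (rule eventually_mono)
    fix n assume n: "2 / real (Suc n) < d"
    have N: "Suc n \<ge> 1" by simp
    show "GN (Suc n) (y, y') \<le> h n"
    proof (cases "y \<in> {0..1} \<and> y' \<in> {0..1}")
      case False thus ?thesis using GN_out[OF N] by auto
    next
      case True
      obtain i0 where i0: "i0 < Suc n" "y \<in> bin (Suc n) i0" using bin_cover[OF N] True by blast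
      obtain j0 where j0: "j0 < Suc n" "y' \<in> bin (Suc n) j0" using bin_cover[OF N] True by blast
      show ?thesis unfolding GN_at[OF N i0 j0] h_def d_def
        using AN_le_far[OF N i0(1) j0(1) i0(2) j0(2)] n by (simp add: d_def)
    qed
  qed
  hence "limsup (\<lambda>n. GN (Suc n) (y, y')) \<le> limsup h" by (rule Limsup_mono)
  also have "h \<longlonglongrightarrow> ennreal (max 0 (- ln d))"
  proof -
    have lim3: "(\<lambda>n. d - 2 / real (Suc n)) \<longlonglongrightarrow> d" using tendsto_diff[OF tendsto_const lim2, of d] by simp
    show ?thesis unfolding h_def
      by (intro tendsto_ennrealI tendsto_max tendsto_const tendsto_minus tendsto_ln lim3) (use d0 in auto)
  qed
  hence "limsup h = ennreal (max 0 (- ln d))" by (intro lim_imp_Limsup) auto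
  also have "\<dots> = log_kernel_pos y y'" using ne by (simp add: log_kernel_pos_def d_def)
  finally show ?thesis .
qed

lemma approx_pc:
  assumes P: "prob_space \<mu>" and sM: "sets \<mu> = sets borel" and AE: "AE x in \<mu>. x \<in> {0..1}"
    and fin: "energy \<mu> < \<infinity>" and \<delta>: "\<delta> > 0"
  shows "\<exists>\<nu>. prob_space \<nu> \<and> has_pc_density \<nu> \<and> measure_support \<nu> \<subseteq> {0..1} \<and>
             energy \<nu> \<le> energy \<mu> + ennreal \<delta>"
proof -
  interpret prob_space \<mu> by (rule P)
  interpret pp: pair_prob_space \<mu> \<mu> by unfold_locales
  have mK: "(\<lambda>p. log_kernel_pos (fst p) (snd p)) \<in> borel_measurable (\<mu> \<Otimes>\<^sub>M \<mu>)"
    by (rule measurable_kpos'[OF sM sM])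
  have e\<mu>: "energy \<mu> = (\<integral>\<^sup>+p. log_kernel_pos (fst p) (snd p) \<partial>(\<mu> \<Otimes>\<^sub>M \<mu>))"
    unfolding energy_def using nn_integral_fst[OF mK] by simp
  define W where "W p = log_kernel_pos (fst p) (snd p) + ennreal (ln 3) + C0" for p :: "real \<times> real"
  have mW: "W \<in> borel_measurable (\<mu> \<Otimes>\<^sub>M \<mu>)" unfolding W_def using mK by measurable
  have mG: "\<And>n. GN (Suc n) \<in> borel_measurable (\<mu> \<Otimes>\<^sub>M \<mu>)" by (rule GN_measurable[OF sM sM])
  have intW: "(\<integral>\<^sup>+p. W p \<partial>(\<mu> \<Otimes>\<^sub>M \<mu>)) = energy \<mu> + ennreal (ln 3) + C0"
    unfolding W_def e\<mu> using mK
    by (simp add: nn_integral_add pp.emeasure_space_1)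
  have Wfin: "(\<integral>\<^sup>+p. W p \<partial>(\<mu> \<Otimes>\<^sub>M \<mu>)) < \<infinity>"
    unfolding intW using fin C0_finite by (simp add: ennreal_add_less_top)
  have "limsup (\<lambda>n. \<integral>\<^sup>+p. GN (Suc n) p \<partial>(\<mu> \<Otimes>\<^sub>M \<mu>)) \<le> (\<integral>\<^sup>+p. limsup (\<lambda>n. GN (Suc n) p) \<partial>(\<mu> \<Otimes>\<^sub>M \<mu>))"
  proof (rule nn_integral_limsup[OF mG mW _ Wfin])
    fix n show "AE p in \<mu> \<Otimes>\<^sub>M \<mu>. GN (Suc n) p \<le> W p"
      using GN_bound[of "Suc n"] by (intro AE_I2) (auto simp: W_def split: prod.splits)
  qed
  also have "\<dots> \<le> (\<integral>\<^sup>+p. log_kernel_pos (fst p) (snd p) \<partial>(\<mu> \<Otimes>\<^sub>M \<mu>))"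
  proof (rule nn_integral_mono)
    fix p :: "real \<times> real"
    obtain y y' where p: "p = (y, y')" by (cases p)
    show "limsup (\<lambda>n. GN (Suc n) p) \<le> log_kernel_pos (fst p) (snd p)"
    proof (cases "y = y'")
      case True thus ?thesis by (simp add: p log_kernel_pos_def)
    next
      case False thus ?thesis using GN_limsup[OF False] by (simp add: p)
    qed
  qed
  also have "\<dots> = energy \<mu>" by (rule e\<mu>[symmetric])
  also have "energy \<mu> < energy \<mu> + ennreal \<delta>"
    using fin \<delta> ennreal_add_left_cancel_less[of "energy \<mu>" 0 "ennreal \<delta>"] by simp
  finally have "eventually (\<lambda>n. (\<integral>\<^sup>+p. GN (Suc n) p \<partial>(\<mu> \<Otimes>\<^sub>M \<mu>)) < energy \<mu> + ennreal \<delta>) sequentially"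
    by (rule Limsup_lessD)
  then obtain n where n: "(\<integral>\<^sup>+p. GN (Suc n) p \<partial>(\<mu> \<Otimes>\<^sub>M \<mu>)) < energy \<mu> + ennreal \<delta>"
    by (auto simp: eventually_sequentially)
  define N where "N = Suc n"
  have N: "N \<ge> 1" by (simp add: N_def)
  have Pn: "prob_space (\<nu>N \<mu> N)" by (rule \<nu>N_prob[OF N P sM AE])
  have "energy (\<nu>N \<mu> N) = (\<integral>\<^sup>+p. GN N p \<partial>(\<mu> \<Otimes>\<^sub>M \<mu>))"
    using energy_\<nu>N[OF N Pn] GN_integral[OF N P sM] by simp
  hence "energy (\<nu>N \<mu> N) \<le> energy \<mu> + ennreal \<delta>" using n by (simp add: N_def)
  thus ?thesis using Pn \<nu>N_pc[OF N] \<nu>N_supp[OF N] by blast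
qed

lemma pc_sets: "has_pc_density \<nu> \<Longrightarrow> sets \<nu> = sets borel"
  unfolding has_pc_density_def by auto

lemma enn_lt_conv:
  fixes a b :: ennreal assumes "enn2ereal a < enn2ereal b + ereal e" "e \<ge> 0"
  shows "a \<le> b + ennreal e"
proof -
  have "enn2ereal (b + ennreal e) = enn2ereal b + ereal e"
    using assms(2) by (simp add: plus_ennreal.rep_eq enn2ereal_ennreal)
  hence "enn2ereal a < enn2ereal (b + ennreal e)" using assms(1) by simp
  thus ?thesis by (simp add: less_ennreal.rep_eq[symmetric] less_imp_le)
qed

theorem proposition3p2:
  fixes c l :: "nat \<Rightarrow> real" and I :: "nat \<Rightarrow> real set" and S :: "real set"
  assumes c_in: "\<And>k. k \<ge> 1 \<Longrightarrow> c k \<in> {0<..<1}"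
    and l_pos: "\<And>k. k \<ge> 1 \<Longrightarrow> l k > 0"
    and l_lim: "l \<longlonglongrightarrow> 0"
    and I_def: "\<And>k. I k = {c k - l k / 2 <..< c k + l k / 2}"
    and S_def: "S = (\<Inter>m\<in>{1..}. \<Union>k\<in>{m..}. I k)"
    and redist: "redistributable I"
  shows "log_capacity S = log_capacity {0..1}"
proof -
  have S01: "S \<subseteq> {0..1}"
  proof
    fix x assume "x \<in> S"
    hence xin: "\<And>m. m \<ge> 1 \<Longrightarrow> \<exists>k\<ge>m. x \<in> I k" by (auto simp: S_def)
    show "x \<in> {0..1}"
    proof (rule ccontr)
      assume nx: "x \<notin> {0..1}"
      define d where "d = (if x < 0 then -x else x - 1)"
      have d: "d > 0" using nx by (auto simp: d_def)
      obtain m where m: "\<And>k. k \<ge> m \<Longrightarrow> norm (l k - 0) < d"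
        using l_lim d unfolding LIMSEQ_iff by blast
      obtain k where k: "k \<ge> max m 1" "x \<in> I k" using xin[of "max m 1"] by auto
      have "\<bar>l k\<bar> < d" using m[of k] k by auto
      moreover have "c k \<in> {0<..<1}" using c_in k by auto
      moreover have "c k - l k / 2 < x" "x < c k + l k / 2" using k I_def by auto
      ultimately show False using nx by (auto simp: d_def split: if_splits)
    qed
  qed
  have adm_sub: "admissible_measures S \<subseteq> admissible_measures {0..1}"
    using S01 by (auto simp: admissible_measures_def)
  have le_energy: "log_energy \<mu> = enn2ereal (energy \<mu>)" if "\<mu> \<in> admissible_measures {0..1}" for \<mu>
    using that unfolding admissible_measures_def by (intro log_energy_eq AE_of_support) auto
  define P where "P \<nu> \<longleftrightarrow> prob_space \<nu> \<and> has_pc_density \<nu> \<and> measure_support \<nu> \<subseteq> {0..1}" for \<nu>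
  define Q where "Q \<delta> \<nu> j \<nu>' \<longleftrightarrow> P \<nu>' \<and> energy \<nu>' \<le> energy \<nu> + ennreal (\<delta>/2^Suc j) \<and>
      (\<exists>n\<ge>Suc j. \<exists>K. finite K \<and> K \<subseteq> {n..} \<and> measure_support \<nu>' \<subseteq> measure_support \<nu> \<inter> (\<Union>k\<in>K. I k))"
    for \<delta> :: real and \<nu> j \<nu>'
  have stepex: "\<exists>\<nu>'. Q \<delta> \<nu> j \<nu>'" if P: "P \<nu>" and \<delta>: "\<delta> > 0" for \<nu> j \<delta>
  proof -
    have hF: "\<exists>F. finite F \<and> (\<forall>A\<in>F. is_interval A \<and> A \<subseteq> {0..1}) \<and> measure_support \<nu> \<subseteq> \<Union>F"
      using P by (intro exI[of _ "{{0..1}}"]) (auto simp: P_def)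
    have he: "(\<delta>/2^Suc j) > 0" using \<delta> by simp
    obtain \<nu>' where \<nu>': "prob_space \<nu>'" "has_pc_density \<nu>'"
        "log_energy \<nu>' < log_energy \<nu> + ereal (\<delta>/2^Suc j)"
        "\<exists>n\<ge>Suc j. \<exists>K. finite K \<and> K \<subseteq> {n..} \<and> measure_support \<nu>' \<subseteq> measure_support \<nu> \<inter> (\<Union>k\<in>K. I k)"
    proof -
      have "\<exists>\<nu>'. prob_space \<nu>' \<and> has_pc_density \<nu>' \<and>
          log_energy \<nu>' < log_energy \<nu> + ereal (\<delta>/2^Suc j) \<and>
          (\<exists>n\<ge>Suc j. \<exists>K. finite K \<and> K \<subseteq> {n..} \<and>
              measure_support \<nu>' \<subseteq> measure_support \<nu> \<inter> (\<Union>k\<in>K. I k))"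
      proof (rule redist[unfolded redistributable_def, rule_format, of \<nu> "\<delta>/2^Suc j" "Suc j"], intro conjI)
        show "prob_space \<nu>" "has_pc_density \<nu>" using P by (simp_all add: P_def)
      qed (use hF he in auto)
      thus ?thesis using that by blast
    qed
    have s1: "measure_support \<nu>' \<subseteq> {0..1}" using \<nu>'(4) P by (auto simp: P_def)
    have e1: "log_energy \<nu>' = enn2ereal (energy \<nu>')"
      using \<nu>'(2) s1 pc_sets by (intro log_energy_eq AE_of_support) auto
    have e0: "log_energy \<nu> = enn2ereal (energy \<nu>)"
      using P pc_sets unfolding P_def by (intro log_energy_eq AE_of_support) auto
    have "energy \<nu>' \<le> energy \<nu> + ennreal (\<delta>/2^Suc j)"
      using \<nu>'(3) \<delta> unfolding e1 e0 by (intro enn_lt_conv) auto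
    thus ?thesis using \<nu>' s1 unfolding Q_def P_def by blast
  qed
  have core: "\<exists>\<mu>'\<in>admissible_measures S. energy \<mu>' \<le> energy \<mu> + ennreal (2*\<delta>)"
    if \<mu>: "\<mu> \<in> admissible_measures {0..1}" "energy \<mu> < \<infinity>" and \<delta>: "\<delta> > 0" for \<mu> \<delta>
  proof -
    have AE\<mu>: "AE x in \<mu>. x \<in> {0..1}" using \<mu> unfolding admissible_measures_def by (intro AE_of_support) auto
    obtain \<nu>0 where \<nu>0: "prob_space \<nu>0" "has_pc_density \<nu>0" "measure_support \<nu>0 \<subseteq> {0..1}"
        "energy \<nu>0 \<le> energy \<mu> + ennreal \<delta>"
      using approx_pc[OF _ _ AE\<mu> \<mu>(2) \<delta>] \<mu> by (auto simp: admissible_measures_def)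
    define step where "step \<nu> j = (SOME \<nu>'. Q \<delta> \<nu> j \<nu>')" for \<nu> j
    define sq where "sq j = rec_nat \<nu>0 (\<lambda>j \<nu>. step \<nu> j) j" for j
    have sq0: "sq 0 = \<nu>0" and sqS: "sq (Suc j) = step (sq j) j" for j by (simp_all add: sq_def)
    have inv: "P (sq j) \<and> energy (sq j) \<le> energy \<nu>0 + ennreal (\<delta> * (1 - 1/2^j))" for j
    proof (induction j)
      case 0 thus ?case using \<nu>0 by (simp add: sq0 P_def)
    next
      case (Suc j)
      have q: "Q \<delta> (sq j) j (sq (Suc j))"
        unfolding sqS step_def using stepex[of "sq j" \<delta> j] Suc \<delta> by (auto intro: someI_ex)
      have "energy (sq (Suc j)) \<le> energy (sq j) + ennreal (\<delta>/2^Suc j)" using q by (simp add: Q_def)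
      also have "\<dots> \<le> energy \<nu>0 + ennreal (\<delta> * (1 - 1/2^j)) + ennreal (\<delta>/2^Suc j)"
        using Suc by (intro add_right_mono) auto
      also have "\<dots> = energy \<nu>0 + ennreal (\<delta> * (1 - 1/2^Suc j))"
      proof -
        have h: "0 \<le> \<delta> * (1 - 1/2^j)" using \<delta> by (intro mult_nonneg_nonneg) (auto simp: field_simps)
        have "ennreal (\<delta> * (1 - 1/2^j)) + ennreal (\<delta>/2^Suc j) = ennreal (\<delta> * (1 - 1/2^j) + \<delta>/2^Suc j)"
          using h \<delta> by (intro ennreal_plus[symmetric]) auto
        also have "\<delta> * (1 - 1/2^j) + \<delta>/2^Suc j = \<delta> * (1 - 1/2^Suc j)" by (simp add: field_simps)
        finally show ?thesis by (simp add: add.assoc)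
      qed
      finally show ?case using q by (simp add: Q_def)
    qed
    have Psq: "P (sq j)" for j using inv by blast
    have Esq: "energy (sq j) \<le> energy \<nu>0 + ennreal \<delta>" for j
    proof -
      have "energy (sq j) \<le> energy \<nu>0 + ennreal (\<delta> * (1 - 1/2^j))" using inv by blast
      also have "\<dots> \<le> energy \<nu>0 + ennreal \<delta>"
        using \<delta> by (intro add_left_mono ennreal_leI) (auto simp: field_simps)
      finally show ?thesis .
    qed
    have qS: "Q \<delta> (sq j) j (sq (Suc j))" for j
      unfolding sqS step_def using stepex[of "sq j" \<delta> j] Psq \<delta> by (auto intro: someI_ex)
    have nest1: "measure_support (sq (Suc j)) \<subseteq> measure_support (sq j)" for j
      using qS[of j] by (auto simp: Q_def)
    have nest: "measure_support (sq i) \<subseteq> measure_support (sq j)" if "j \<le> i" for i j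
      using that
    proof (induction i rule: dec_induct)
      case (step i) thus ?case using nest1[of i] by blast
    qed simp
    have inI: "measure_support (sq (Suc j)) \<subseteq> (\<Union>k\<in>{Suc j..}. I k)" for j
      using qS[of j] unfolding Q_def by force
    have sets_sq: "sets (sq j) = sets borel" for j using Psq[of j] pc_sets unfolding P_def by blast
    have rd: "real_distribution (sq j)" for j
      using Psq[of j] sets_sq[of j] by (auto simp: P_def real_distribution_iff)
    have AEsq: "AE x in sq j. x \<in> {0..1}" for j
      using Psq[of j] sets_sq[of j] unfolding P_def by (intro AE_of_support) auto
    have meas1: "measure (sq n) {-1<..1} = 1" for n
    proof -
      interpret real_distribution "sq n" by (rule rd)
      have "AE x in sq n. x \<in> {-1<..1::real}" using AEsq[of n] by (rule eventually_mono) auto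
      thus "measure (sq n) {-1<..1} = 1" by (subst prob_eq_1) auto
    qed
    have tight: "tight sq"
      unfolding tight_def
    proof (intro conjI allI impI)
      fix \<epsilon> :: real assume "\<epsilon> > 0"
      show "\<exists>a b. a < b \<and> (\<forall>n. 1 - \<epsilon> < Sigma_Algebra.measure (sq n) {a<..b})"
        by (rule exI[of _ "-1::real"], rule exI[of _ "1::real"]) (use meas1 \<open>\<epsilon> > 0\<close> in auto)
    qed (rule rd)
    obtain r \<mu>s where r: "strict_mono r" and rd\<mu>: "real_distribution \<mu>s"
        and wc: "weak_conv_m (sq \<circ> id \<circ> r) \<mu>s"
      using tight_imp_convergent_subsubsequence[OF tight, of id] by (auto simp: strict_mono_def)
    have wc': "weak_conv_m (\<lambda>n. sq (r n)) \<mu>s" using wc by (simp add: comp_def)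
    have sets\<mu>s: "sets \<mu>s = sets borel" using rd\<mu> by (simp add: real_distribution_iff)
    have supp_sub: "measure_support \<mu>s \<subseteq> measure_support (sq j)" for j
    proof
      fix x assume x: "x \<in> measure_support \<mu>s"
      show "x \<in> measure_support (sq j)"
      proof (rule ccontr)
        assume "x \<notin> measure_support (sq j)"
        moreover have "open (- measure_support (sq j))"
          using measure_support_closed[OF sets_sq[of j]] by (simp add: open_Compl)
        ultimately obtain e where e: "e > 0" "ball x e \<subseteq> - measure_support (sq j)"
          using open_contains_ball by blast
        have "eventually (\<lambda>n. emeasure (sq (r n)) (ball x e) = 0) sequentially"
          unfolding eventually_sequentially
        proof (intro exI[of _ j] allI impI)
          fix n assume "j \<le> n"
          hence "j \<le> r n" using seq_suble[OF r, of n] by linarith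
          hence "measure_support (sq (r n)) \<subseteq> measure_support (sq j)" by (rule nest)
          thus "emeasure (sq (r n)) (ball x e) = 0"
            using e by (intro emeasure_zero_off_support[OF sets_sq]) (auto intro: borel_open)
        qed
        hence "emeasure \<mu>s (ball x (e/2)) = 0"
          using weak_limit_null[OF rd rd\<mu> wc' e(1)] by blast
        moreover have "0 < emeasure \<mu>s (ball x (e/2))" using x e(1) unfolding measure_support_def by auto
        ultimately show False by simp
      qed
    qed
    have suppS: "measure_support \<mu>s \<subseteq> S"
    proof
      fix x assume x: "x \<in> measure_support \<mu>s"
      show "x \<in> S" unfolding S_def
      proof
        fix m :: nat assume "m \<in> {1..}"
        then obtain j where j: "m = Suc j" by (cases m) auto
        show "x \<in> (\<Union>k\<in>{m..}. I k)" using supp_sub[of "Suc j"] inI[of j] x j by blast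
      qed
    qed
    have comp: "compact (measure_support \<mu>s)"
      using measure_support_closed[OF sets\<mu>s] suppS S01
      by (auto simp: compact_eq_bounded_closed intro: bounded_subset[OF bounded_closed_interval])
    have adm: "\<mu>s \<in> admissible_measures S"
      using rd\<mu> comp suppS by (auto simp: admissible_measures_def real_distribution_iff)
    have AE\<mu>s: "AE x in \<mu>s. x \<in> {0..1}" using suppS S01 sets\<mu>s by (intro AE_of_support) auto
    have "energy \<mu>s \<le> energy \<nu>0 + ennreal \<delta>"
      by (rule energy_lsc[OF rd rd\<mu> wc' Esq])
    also have "\<dots> \<le> energy \<mu> + ennreal \<delta> + ennreal \<delta>" using \<nu>0(4) by (intro add_right_mono)
    also have "\<dots> = energy \<mu> + ennreal (2*\<delta>)"
      using \<delta> by (simp add: add.assoc ennreal_plus[symmetric] del: ennreal_plus)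
    finally show ?thesis using adm by blast
  qed
  have INFeq: "(INF \<mu> \<in> admissible_measures S. log_energy \<mu>) = (INF \<mu> \<in> admissible_measures {0..1}. log_energy \<mu>)"
  proof (rule antisym)
    show "(INF \<mu> \<in> admissible_measures {0..1}. log_energy \<mu>) \<le> (INF \<mu> \<in> admissible_measures S. log_energy \<mu>)"
      using adm_sub by (rule INF_superset_mono) simp
    show "(INF \<mu> \<in> admissible_measures S. log_energy \<mu>) \<le> (INF \<mu> \<in> admissible_measures {0..1}. log_energy \<mu>)"
    proof (rule INF_greatest)
      fix \<mu> assume \<mu>: "\<mu> \<in> admissible_measures {0..1}"
      show "(INF \<mu> \<in> admissible_measures S. log_energy \<mu>) \<le> log_energy \<mu>"
      proof (cases "energy \<mu> = \<infinity>")
        case True thus ?thesis using le_energy[OF \<mu>] by simp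
      next
        case False
        hence fin: "energy \<mu> < \<infinity>" by (simp add: top.not_eq_extremum)
        show ?thesis
        proof (rule ereal_le_epsilon2)
          fix e :: real assume e: "e > 0"
          obtain \<mu>' where \<mu>': "\<mu>' \<in> admissible_measures S" "energy \<mu>' \<le> energy \<mu> + ennreal (2*(e/2))"
            using core[OF \<mu> fin, of "e/2"] e by auto
          have "(INF \<mu> \<in> admissible_measures S. log_energy \<mu>) \<le> log_energy \<mu>'"
            using \<mu>'(1) by (rule INF_lower)
          also have "\<dots> = enn2ereal (energy \<mu>')" using le_energy \<mu>'(1) adm_sub by blast
          also have "\<dots> \<le> enn2ereal (energy \<mu> + ennreal e)"
            using \<mu>'(2) by (simp add: less_eq_ennreal.rep_eq[symmetric])
          also have "\<dots> = log_energy \<mu> + ereal e"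
            using e le_energy[OF \<mu>] by (simp add: plus_ennreal.rep_eq enn2ereal_ennreal)
          finally show "(INF \<mu> \<in> admissible_measures S. log_energy \<mu>) \<le> log_energy \<mu> + ereal e" .
        qed
      qed
    qed
  qed
  show ?thesis unfolding log_capacity_def INFeq ..
qed

end
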